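(* Let $S$ be a set of $n=5$ points all lying on a circle $\Gamma$ with center $O$, such that $\Gamma=$ SEC$(S)$, no two points of $S$ are antipodal on $\Gamma$, and no isometry of the plane other than the identity maps $S$ onto itself. Then there exist distinct $p,q\in S$ such that SED$(S\setminus\{p\})=$ SED$(S)$ and the antipodal point $q'$ of $q$ on $\Gamma$ lies in the open arc of $\Gamma$ that contains $p$ and whose endpoints are the two points of $S$ adjacent to $p$ in the cyclic order around $O$.
   Context: SED$(X)$ is the smallest closed disk containing a finite set $X$, and SEC$(X)$ is its boundary circle. Two points of $\Gamma$ are antipodal if the segment joining them passes through $O$. *)

theory Defs
  imports "HOL-Analysis.Analysis"
begin

definition is_enclosing_min_disk :: "complex set \<Rightarrow> complex \<Rightarrow> real \<Rightarrow> bool" where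
  "is_enclosing_min_disk X c r \<longleftrightarrow>
     X \<subseteq> cball c r \<and> (\<forall>c' r'. X \<subseteq> cball c' r' \<longrightarrow> r \<le> r')"

definition SED :: "complex set \<Rightarrow> complex set" where
  "SED X = (THE D. \<exists>c r. D = cball c r \<and> is_enclosing_min_disk X c r)"

definition antipode :: "complex \<Rightarrow> complex \<Rightarrow> complex" where
  "antipode c x = 2 * c - x"

definition plane_isometry :: "(complex \<Rightarrow> complex) \<Rightarrow> bool" where
  "plane_isometry f \<longleftrightarrow> (\<forall>x y. dist (f x) (f y) = dist x y)"

definition open_arc :: "complex \<Rightarrow> real \<Rightarrow> complex \<Rightarrow> complex \<Rightarrow> complex \<Rightarrow> complex set" where
  "open_arc c R a b p = connected_component_set (sphere c R - {a, b}) p"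

end

theory Submission
  imports Defs
begin

definition pt :: "complex \<Rightarrow> real \<Rightarrow> real \<Rightarrow> complex" where
  "pt c R t = c + Complex (R * cos t) (R * sin t)"

definition ip :: "complex \<Rightarrow> complex \<Rightarrow> real" where
  "ip z w = Re z * Re w + Im z * Im w"

lemma Re_pt[simp]: "Re (pt c R t) = Re c + R * cos t" by (simp add: pt_def)
lemma Im_pt[simp]: "Im (pt c R t) = Im c + R * sin t" by (simp add: pt_def)

lemma dist_sq: "(dist a b)^2 = (Re a - Re b)^2 + (Im a - Im b)^2"
  by (simp add: dist_norm cmod_power2)

lemma pt_period: "pt c R (t + 2*pi) = pt c R t"
  by (simp add: pt_def)

lemma pt_period_int: "pt c R (t + 2*pi * of_int k) = pt c R t"
  by (simp add: pt_def cos_add sin_add)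

lemma pt_sphere: "R \<ge> 0 \<Longrightarrow> pt c R t \<in> sphere c R"
proof -
  assume R: "R \<ge> 0"
  have e: "(R * cos t)^2 + (R * sin t)^2 = R^2 * ((sin t)^2 + (cos t)^2)" by algebra
  have "(dist c (pt c R t))^2 = (R * cos t)^2 + (R * sin t)^2"
    by (simp add: dist_sq)
  also have "\<dots> = R^2" using e by simp
  finally have "(dist c (pt c R t))^2 = R^2" .
  thus ?thesis using R by (simp add: power2_eq_iff_nonneg)
qed

lemma pt_inj:
  assumes "R > 0" "pt c R s = pt c R t" "\<bar>s - t\<bar> < 2*pi"
  shows "s = t"
proof -
  have "cos s = cos t" "sin s = sin t" using assms(1,2)
    by (auto simp: complex_eq_iff)
  then obtain n::int where n: "s = t + 2*pi*n" using sin_cos_eq_iff by metis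
  have "\<bar>2*pi*n\<bar> < 2*pi" using n assms(3) by simp
  hence "\<bar>real_of_int n\<bar> < 1" by (simp add: abs_mult)
  hence "n = 0" by linarith
  thus ?thesis using n by simp
qed

lemma normalize_angle: "\<exists>k::int. a \<le> t + 2*pi*k \<and> t + 2*pi*k < a + 2*pi"
proof -
  define k where "k = - \<lfloor>(t - a) / (2*pi)\<rfloor>"
  have f1: "of_int \<lfloor>(t - a) / (2*pi)\<rfloor> \<le> (t - a) / (2*pi)" by (rule of_int_floor_le)
  have f2: "(t - a) / (2*pi) < of_int \<lfloor>(t - a) / (2*pi)\<rfloor> + 1" by (rule real_of_int_floor_add_one_gt)
  have p: "2*pi > 0" by simp
  define fl where "fl = real_of_int \<lfloor>(t - a) / (2*pi)\<rfloor>"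
  from f1 have "fl * (2*pi) \<le> t - a"
    using p unfolding fl_def by (simp only: le_divide_eq)
  moreover from f2 have "t - a < (fl + 1) * (2*pi)"
    using p unfolding fl_def by (simp only: divide_less_eq)
  moreover have "real_of_int k = - fl" by (simp add: k_def fl_def)
  ultimately show ?thesis by (intro exI[of _ k]) (auto simp: algebra_simps)
qed

lemma sphere_pt:
  assumes "R > 0" "z \<in> sphere c R"
  shows "\<exists>t. a \<le> t \<and> t < a + 2*pi \<and> z = pt c R t"
proof -
  have "rcis (cmod (z - c)) (Arg (z - c)) = z - c" by (rule rcis_cmod_Arg)
  moreover have "cmod (z - c) = R" using assms by (simp add: dist_norm norm_minus_commute)
  ultimately have z: "z = pt c R (Arg (z - c))"
    by (auto simp: pt_def complex_eq_iff)
  obtain k::int where k: "a \<le> Arg (z - c) + 2*pi*k \<and> Arg (z - c) + 2*pi*k < a + 2*pi"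
    using normalize_angle by blast
  have "z = pt c R (Arg (z - c) + 2 * pi * of_int k)" using z by (simp only: pt_period_int)
  thus ?thesis using k by blast
qed

lemma ip_pt: "ip (pt c R t - c) (Complex (cos m) (sin m)) = R * cos (t - m)"
  by (simp add: ip_def cos_diff algebra_simps)


lemma mid_identity:
  fixes s c1 c2 :: complex
  shows "(dist s ((c1 + c2) / 2))^2 = ((dist s c1)^2 + (dist s c2)^2)/2 - (dist c1 c2)^2/4"
  unfolding dist_sq by (simp add: power2_eq_square field_simps)

lemma min_unique:
  assumes X: "X \<noteq> {}" and m1: "is_enclosing_min_disk X c1 r1" and m2: "is_enclosing_min_disk X c2 r2"
  shows "c1 = c2 \<and> r1 = r2"
proof -
  have r: "r1 = r2" using m1 m2 unfolding is_enclosing_min_disk_def by force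
  obtain s0 where s0: "s0 \<in> X" using X by blast
  have r0: "r1 \<ge> 0" using m1 s0 unfolding is_enclosing_min_disk_def
    by (meson dist_commute mem_cball order_trans subsetD zero_le_dist)
  have "c1 = c2"
  proof (rule ccontr)
    assume ne: "c1 \<noteq> c2"
    define \<delta> where "\<delta> = (dist c1 c2)^2/4"
    have dpos: "\<delta> > 0" using ne by (simp add: \<delta>_def)
    have "dist ((c1 + c2)/2) s \<le> sqrt (r1^2 - \<delta>)" if s: "s \<in> X" for s
    proof -
      have a1: "dist s c1 \<le> r1" using m1 s unfolding is_enclosing_min_disk_def
        by (auto simp: dist_commute)
      have a2: "dist s c2 \<le> r1" using m2 s r unfolding is_enclosing_min_disk_def
        by (auto simp: dist_commute)
      have "(dist s c1)^2 \<le> r1^2" using a1 by (simp add: power_mono)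
      moreover have "(dist s c2)^2 \<le> r1^2" using a2 by (simp add: power_mono)
      ultimately have "(dist s ((c1 + c2) / 2))^2 \<le> r1^2 - \<delta>"
        unfolding mid_identity \<delta>_def by (simp add: field_simps)
      thus ?thesis by (simp add: real_le_rsqrt dist_commute)
    qed
    hence "X \<subseteq> cball ((c1 + c2)/2) (sqrt (r1^2 - \<delta>))" by auto
    hence "r1 \<le> sqrt (r1^2 - \<delta>)" using m1 unfolding is_enclosing_min_disk_def by blast
    moreover have "sqrt (r1^2 - \<delta>) < sqrt (r1^2)" using dpos by (simp del: real_sqrt_abs)
    ultimately show False using r0 by simp
  qed
  thus ?thesis using r by simp
qed

lemma min_exists:
  assumes X: "X \<noteq> {}" and sub: "X \<subseteq> cball c0 M"
  shows "\<exists>c r. is_enclosing_min_disk X c r"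
proof -
  define C where "C = (\<Inter>s\<in>X. {p::complex\<times>real. dist s (fst p) \<le> snd p})"
  have clC: "closed C" unfolding C_def
    by (intro closed_INT ballI closed_Collect_le continuous_intros)
  define K where "K = (cball c0 (2*M) \<times> {0..M}) \<inter> C"
  have cK: "compact K" unfolding K_def
    by (intro compact_Int_closed compact_Times compact_cball compact_Icc clC)
  obtain s0 where s0: "s0 \<in> X" using X by blast
  have M0: "M \<ge> 0" using sub s0 by (meson mem_cball order_trans subsetD zero_le_dist)
  have inK: "(c0, M) \<in> K" using sub M0 unfolding K_def C_def by (auto simp: dist_commute)
  obtain p0 where p0: "p0 \<in> K" and pmin: "\<forall>y\<in>K. snd p0 \<le> snd y"
    using continuous_attains_inf[OF cK, of snd] inK continuous_on_snd[OF continuous_on_id] by blast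
  show ?thesis
  proof (intro exI[of _ "fst p0"] exI[of _ "snd p0"], unfold is_enclosing_min_disk_def, intro conjI allI impI)
    show "X \<subseteq> cball (fst p0) (snd p0)" using p0 unfolding K_def C_def
      by (auto simp: subset_iff mem_cball) (metis dist_commute)
    fix c' r' assume h: "X \<subseteq> cball c' r'"
    show "snd p0 \<le> r'"
    proof (cases "r' \<ge> M")
      case True
      have "snd p0 \<le> M" using p0 unfolding K_def by auto
      thus ?thesis using True by simp
    next
      case False
      have d1: "dist c0 s0 \<le> M" using sub s0 by auto
      have d2: "dist c' s0 \<le> r'" using h s0 by auto
      have "dist c0 c' \<le> 2*M" using d1 d2 False dist_triangle[of c0 c' s0]
        by (simp add: dist_commute)
      moreover have "r' \<ge> 0" using d2 zero_le_dist[of c' s0] by linarith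
      ultimately have "(c', r') \<in> K" using h False unfolding K_def C_def
        by (auto simp: dist_commute)
      thus ?thesis using pmin by force
    qed
  qed
qed

lemma SED_eq:
  assumes "X \<noteq> {}" "is_enclosing_min_disk X c r"
  shows "SED X = cball c r"
  unfolding SED_def
proof (rule the_equality)
  show "\<exists>c' r'. cball c r = cball c' r' \<and> is_enclosing_min_disk X c' r'" using assms by blast
  fix D assume "\<exists>c' r'. D = cball c' r' \<and> is_enclosing_min_disk X c' r'"
  then obtain c' r' where "D = cball c' r'" "is_enclosing_min_disk X c' r'" by blast
  thus "D = cball c r" using min_unique[OF assms(1) assms(2)] by auto
qed

lemma SED_min:
  assumes X: "X \<noteq> {}" and sub: "X \<subseteq> cball c0 M" and eq: "SED X = cball c R" and R: "R > 0"
  shows "is_enclosing_min_disk X c R"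
proof -
  obtain c1 r1 where m: "is_enclosing_min_disk X c1 r1" using min_exists[OF X sub] by blast
  have "cball c R = cball c1 r1" using SED_eq[OF X m] eq by simp
  hence "c = c1 \<and> R = r1" using R by (simp add: cball_eq_cball_iff)
  thus ?thesis using m by simp
qed


definition HH :: "complex set \<Rightarrow> complex \<Rightarrow> bool" where
  "HH X c \<longleftrightarrow> (\<forall>d. d \<noteq> 0 \<longrightarrow> (\<exists>s\<in>X. ip (s - c) d \<le> 0))"

lemma shift_identity:
  fixes s c d :: complex and t :: real
  shows "(dist s (c + of_real t * d))^2 = (dist s c)^2 - 2 * t * ip (s - c) d + t^2 * ((Re d)^2 + (Im d)^2)"
  unfolding dist_sq ip_def by (simp add: power2_eq_square algebra_simps)

lemma H_of_min:
  assumes fin: "finite X" and X: "X \<noteq> {}" and sub: "X \<subseteq> sphere c R" and R: "R > 0"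
    and m: "is_enclosing_min_disk X c R"
  shows "HH X c"
  unfolding HH_def
proof (intro allI impI, rule ccontr)
  fix d :: complex assume d: "d \<noteq> 0" and no: "\<not> (\<exists>s\<in>X. ip (s - c) d \<le> 0)"
  define mm where "mm = Min ((\<lambda>s. ip (s - c) d) ` X)"
  have mpos: "mm > 0" unfolding mm_def using fin X no by (simp add: Min_gr_iff) (meson not_le)
  have mle: "mm \<le> ip (s - c) d" if "s \<in> X" for s unfolding mm_def using fin that by simp
  define N where "N = (Re d)^2 + (Im d)^2"
  have Npos: "N > 0" unfolding N_def using d by (simp add: complex_eq_iff sum_power2_gt_zero_iff)
  define t where "t = mm / N"
  have tpos: "t > 0" using mpos Npos by (simp add: t_def)
  define e where "e = mm^2 / N"
  have epos: "e > 0" using mpos Npos by (simp add: e_def)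
  have "dist s (c + of_real t * d) \<le> sqrt (R^2 - e)" if s: "s \<in> X" for s
  proof -
    have ds: "dist s c = R" using sub s by (auto simp: dist_commute)
    have "(dist s (c + of_real t * d))^2 = R^2 - 2 * t * ip (s - c) d + t^2 * N"
      unfolding shift_identity ds N_def ..
    also have "\<dots> \<le> R^2 - 2 * t * mm + t^2 * N" using mle[OF s] tpos by simp
    also have "\<dots> = R^2 - e" unfolding t_def e_def using Npos by (simp add: power2_eq_square field_simps)
    finally show ?thesis by (rule real_le_rsqrt)
  qed
  hence "X \<subseteq> cball (c + of_real t * d) (sqrt (R^2 - e))" by (auto simp: dist_commute)
  hence "R \<le> sqrt (R^2 - e)" using m unfolding is_enclosing_min_disk_def by blast
  moreover have "sqrt (R^2 - e) < sqrt (R^2)" using epos by (simp del: real_sqrt_abs)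
  ultimately show False using R by simp
qed

lemma min_of_H:
  assumes X: "X \<noteq> {}" and sub: "X \<subseteq> sphere c R" and R: "R > 0" and H: "HH X c"
  shows "is_enclosing_min_disk X c R"
  unfolding is_enclosing_min_disk_def
proof (intro conjI allI impI)
  show "X \<subseteq> cball c R" using sub by auto
  fix c' r' assume h: "X \<subseteq> cball c' r'"
  show "R \<le> r'"
  proof (cases "c' = c")
    case True
    obtain s0 where s0: "s0 \<in> X" using X by blast
    thus ?thesis using h sub True by fastforce
  next
    case False
    define d where "d = c' - c"
    have "d \<noteq> 0" using False by (simp add: d_def)
    then obtain s where s: "s \<in> X" and ips: "ip (s - c) d \<le> 0" using H unfolding HH_def by blast
    have ds: "dist s c = R" using sub s by (auto simp: dist_commute)
    have eq: "(dist s c')^2 = R^2 - 2 * ip (s - c) d + ((Re d)^2 + (Im d)^2)"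
      using shift_identity[of s c 1 d] ds by (simp add: d_def)
    have "R^2 \<le> (dist s c')^2" using eq ips zero_le_power2[of "Re d"] zero_le_power2[of "Im d"]
      by linarith
    hence "R \<le> dist s c'" by (rule power2_le_imp_le) simp
    moreover have "dist s c' \<le> r'" using h s by (auto simp: dist_commute)
    ultimately show ?thesis by simp
  qed
qed

lemma cos_shift: "cos (w + pi/2 + 2 * pi * of_int k) = - sin w"
  by (simp add: cos_add sin_add)

lemma ip_rcis: "ip z (rcis r p) = r * ip z (Complex (cos p) (sin p))"
  by (simp add: ip_def algebra_simps)

lemma H_angles:
  assumes R: "R > 0" and o: "a < b" "b < x" "x < y" "y < a + 2*pi"
    and g: "b - a < pi" "x - b < pi" "y - x < pi" "a + 2*pi - y < pi"
  shows "HH {pt c R a, pt c R b, pt c R x, pt c R y} c"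
  unfolding HH_def
proof (intro allI impI)
  fix d :: complex assume d: "d \<noteq> 0"
  define \<phi> where "\<phi> = Arg d"
  have dd: "d = rcis (cmod d) \<phi>" unfolding \<phi>_def by (simp add: rcis_cmod_Arg)
  obtain k::int where k: "a \<le> \<phi> + pi/2 + 2 * pi * of_int k \<and> \<phi> + pi/2 + 2 * pi * of_int k < a + 2*pi"
    using normalize_angle by blast
  define \<psi> where "\<psi> = \<phi> + pi/2 + 2 * pi * of_int k"
  have key: "ip (pt c R t - c) d \<le> 0" if "0 \<le> t - \<psi>" "t - \<psi> \<le> pi" for t
  proof -
    have "cos (t - \<phi>) = cos ((t - \<psi>) + pi/2 + 2 * pi * of_int k)"
      by (rule arg_cong[where f=cos]) (simp add: \<psi>_def)
    also have "\<dots> = - sin (t - \<psi>)" by (rule cos_shift)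
    finally have "cos (t - \<phi>) = - sin (t - \<psi>)" .
    moreover have "sin (t - \<psi>) \<ge> 0" using that by (simp add: sin_ge_zero)
    ultimately have "cos (t - \<phi>) \<le> 0" by simp
    moreover have "ip (pt c R t - c) d = cmod d * (R * cos (t - \<phi>))"
      by (subst dd, subst ip_rcis, subst ip_pt) simp
    ultimately show ?thesis using R by (simp add: mult_nonneg_nonpos mult_le_0_iff)
  qed
  have pa: "pt c R (a + 2*pi) = pt c R a" by (rule pt_period)
  show "\<exists>s\<in>{pt c R a, pt c R b, pt c R x, pt c R y}. ip (s - c) d \<le> 0"
  proof -
    have "\<psi> \<le> b \<or> (b < \<psi> \<and> \<psi> \<le> x) \<or> (x < \<psi> \<and> \<psi> \<le> y) \<or> y < \<psi>" by linarith
    moreover have "\<psi> \<ge> a" "\<psi> < a + 2*pi" using k by (auto simp: \<psi>_def)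
    ultimately show ?thesis using key[of b] key[of x] key[of y] key[of "a + 2*pi"] pa o g
      by (smt (verit) insertCI)
  qed
qed

lemma gap_lemma:
  assumes R: "R > 0" and H: "HH X c" and uv: "v - u > pi"
    and cov: "\<forall>s\<in>X. \<exists>t. v \<le> t \<and> t \<le> u + 2*pi \<and> s = pt c R t"
  shows False
proof -
  define m where "m = (u + v)/2"
  define d where "d = - Complex (cos m) (sin m)"
  have "d \<noteq> 0" by (simp add: d_def complex_eq_iff) (metis sin_cos_squared_add zero_neq_one power2_eq_square mult_zero_left add_0)
  then obtain s where s: "s \<in> X" and ips: "ip (s - c) d \<le> 0" using H unfolding HH_def by blast
  obtain t where t: "v \<le> t" "t \<le> u + 2*pi" "s = pt c R t" using cov s by blast
  have "ip (s - c) d = - (R * cos (t - m))" unfolding d_def t(3)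
    using ip_pt[of c R t m] by (simp add: ip_def)
  hence c0: "cos (t - m) \<ge> 0" using ips R by (simp add: zero_le_mult_iff)
  have "-(pi/2) < t - m - pi" using t uv unfolding m_def by (simp add: field_simps)
  moreover have "t - m - pi < pi/2" using t uv unfolding m_def by (simp add: field_simps)
  ultimately have "cos (t - m - pi) > 0" by (intro cos_gt_zero_pi)
  moreover have "cos (t - m - pi) = - cos (t - m)" by (simp add: cos_diff)
  ultimately show False using c0 by simp
qed


lemma pt_cis: "pt c R t = c + of_real R * cis t"
  by (simp add: complex_eq_iff)

lemma continuous_pt: "continuous_on A (pt c R)"
  unfolding pt_cis[abs_def] by (intro continuous_intros)

lemma pt_ne:
  assumes "R > 0" "s \<noteq> t" "\<bar>s - t\<bar> < 2*pi"
  shows "pt c R s \<noteq> pt c R t"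
  using pt_inj assms by blast

lemma arc_in:
  assumes R: "R > 0" and ab: "a < p" "p < b" "b - a < pi" and t: "a < t" "t < b"
  shows "pt c R t \<in> open_arc c R (pt c R a) (pt c R b) (pt c R p)"
proof -
  define C where "C = pt c R ` {a<..<b}"
  have "connected C" unfolding C_def
    by (intro connected_continuous_image continuous_pt connected_Ioo)
  moreover have "pt c R p \<in> C" using ab by (auto simp: C_def)
  moreover have "C \<subseteq> sphere c R - {pt c R a, pt c R b}"
  proof
    fix z assume "z \<in> C"
    then obtain s where s: "a < s" "s < b" "z = pt c R s" by (auto simp: C_def)
    have "pt c R s \<noteq> pt c R a" using s ab R pi_gt_zero by (intro pt_ne) auto
    moreover have "pt c R s \<noteq> pt c R b" using s ab R pi_gt_zero by (intro pt_ne) auto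
    ultimately show "z \<in> sphere c R - {pt c R a, pt c R b}" using s R pt_sphere[of R c s] by auto
  qed
  ultimately have "C \<subseteq> open_arc c R (pt c R a) (pt c R b) (pt c R p)"
    unfolding open_arc_def by (meson connected_component_maximal)
  moreover have "pt c R t \<in> C" using t by (auto simp: C_def)
  ultimately show ?thesis by blast
qed

lemma side_in:
  assumes R: "R > 0" and ab: "a < b" "b - a < pi" and s: "a < s" "s < b"
  shows "R * cos ((b - a)/2) < ip (pt c R s - c) (Complex (cos ((a+b)/2)) (sin ((a+b)/2)))"
proof -
  have "\<bar>s - (a+b)/2\<bar> < (b - a)/2" using ab s by (simp add: abs_less_iff field_simps)
  hence "cos ((b - a)/2) < cos \<bar>s - (a+b)/2\<bar>"
    using ab s by (intro cos_monotone_0_pi) auto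
  thus ?thesis unfolding ip_pt using R by simp
qed

lemma side_out:
  assumes R: "R > 0" and ab: "a < b" "b - a < pi" and s: "b < s" "s < a + 2*pi"
  shows "ip (pt c R s - c) (Complex (cos ((a+b)/2)) (sin ((a+b)/2))) < R * cos ((b - a)/2)"
proof -
  have "cos (s - (a+b)/2) < cos ((b - a)/2)"
  proof (cases "s - (a+b)/2 \<le> pi")
    case True
    thus ?thesis using ab s by (intro cos_monotone_0_pi) (auto simp: field_simps)
  next
    case False
    have "cos (2*pi - (s - (a+b)/2)) < cos ((b - a)/2)"
      using ab s False by (intro cos_monotone_0_pi) (auto simp: field_simps)
    thus ?thesis by simp
  qed
  thus ?thesis unfolding ip_pt using R by simp
qed

lemma arc_out:
  assumes R: "R > 0" and ab: "a < p" "p < b" "b - a < pi" and t: "b < t" "t < a + 2*pi"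
  shows "pt c R t \<notin> open_arc c R (pt c R a) (pt c R b) (pt c R p)"
proof
  assume tin: "pt c R t \<in> open_arc c R (pt c R a) (pt c R b) (pt c R p)"
  define Sx where "Sx = sphere c R - {pt c R a, pt c R b}"
  define K where "K = open_arc c R (pt c R a) (pt c R b) (pt c R p)"
  define f where "f = (\<lambda>w. ip (w - c) (Complex (cos ((a+b)/2)) (sin ((a+b)/2))))"
  define k where "k = R * cos ((b - a)/2)"
  define U where "U = {w. k < f w}"
  define V where "V = {w. f w < k}"
  have cf: "continuous_on UNIV f" unfolding f_def ip_def by (intro continuous_intros)
  have oU: "open U" unfolding U_def by (intro open_Collect_less cf continuous_intros)
  have oV: "open V" unfolding V_def by (intro open_Collect_less cf continuous_intros)
  have cK: "connected K" unfolding K_def open_arc_def by simp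
  have KS: "K \<subseteq> Sx" unfolding K_def open_arc_def Sx_def by (rule connected_component_subset)
  have SUV: "Sx \<subseteq> U \<union> V"
  proof
    fix w assume w: "w \<in> Sx"
    then obtain s where s: "a \<le> s" "s < a + 2*pi" "w = pt c R s"
      using sphere_pt[OF R, of w c a] by (auto simp: Sx_def)
    have "s \<noteq> a" using w s by (auto simp: Sx_def)
    moreover have "s \<noteq> b" using w s by (auto simp: Sx_def)
    ultimately have "(a < s \<and> s < b) \<or> (b < s \<and> s < a + 2*pi)" using s by linarith
    thus "w \<in> U \<union> V"
      using side_in[OF R, of a b s c] side_out[OF R, of a b s c] ab s
      by (auto simp: U_def V_def f_def k_def)
  qed
  have "U \<inter> V \<inter> K = {}" by (auto simp: U_def V_def)
  moreover have "pt c R p \<in> U \<inter> K"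
  proof -
    have "pt c R p \<in> K" using arc_in[OF R ab, of p c] ab by (simp add: K_def)
    moreover have "pt c R p \<in> U" using side_in[OF R, of a b p c] ab by (auto simp: U_def f_def k_def)
    ultimately show ?thesis by blast
  qed
  moreover have "pt c R t \<in> V \<inter> K"
    using tin side_out[OF R, of a b t c] ab t by (auto simp: V_def f_def k_def K_def)
  ultimately show False using connectedD[OF cK oU oV] KS SUV by blast
qed


lemma antipode_pt: "antipode c (pt c R y) = pt c R (y - pi)"
  by (simp add: antipode_def complex_eq_iff cos_diff sin_diff)

lemma main_config:
  assumes R: "R > 0" and o: "a < p" "p < b" "b < x" "x < y" "y < a + 2*pi"
    and g: "b - a < pi" "x - b < pi" "y - x < pi" "a + 2*pi - y < pi" "y - b < pi"
    and S: "S = {pt c R a, pt c R p, pt c R b, pt c R x, pt c R y}"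
    and SED: "SED S = cball c R"
  shows "\<exists>p\<in>S. \<exists>q\<in>S. p \<noteq> q \<and> SED (S - {p}) = SED S \<and>
           (\<exists>a\<in>S - {p}. \<exists>b\<in>S - {p}. a \<noteq> b \<and>
              open_arc c R a b p \<inter> S = {p} \<and>
              antipode c q \<in> open_arc c R a b p)"
proof -
  have pi0: "pi > 0" by (rule pi_gt_zero)
  have n1: "pt c R p \<noteq> pt c R a" using R o g pi0 by (intro pt_ne) auto
  have n2: "pt c R p \<noteq> pt c R b" using R o g pi0 by (intro pt_ne) auto
  have n3: "pt c R p \<noteq> pt c R x" using R o g pi0 by (intro pt_ne) auto
  have n4: "pt c R p \<noteq> pt c R y" using R o g pi0 by (intro pt_ne) auto
  have n5: "pt c R a \<noteq> pt c R b" using R o g pi0 by (intro pt_ne) auto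
  have Sp: "S - {pt c R p} = {pt c R a, pt c R b, pt c R x, pt c R y}"
    using S n1 n2 n3 n4 by auto
  have HH: "HH (S - {pt c R p}) c" unfolding Sp using o g R by (intro H_angles) auto
  have sub: "S - {pt c R p} \<subseteq> sphere c R" unfolding Sp using R pt_sphere[of R c] by auto
  have ne: "S - {pt c R p} \<noteq> {}" unfolding Sp by simp
  have sed: "SED (S - {pt c R p}) = SED S"
    using SED_eq[OF ne min_of_H[OF ne sub R HH]] SED by simp
  define A where "A = open_arc c R (pt c R a) (pt c R b) (pt c R p)"
  have pA: "pt c R p \<in> A" unfolding A_def using R o g by (intro arc_in) auto
  have aA: "pt c R a \<notin> A" "pt c R b \<notin> A" unfolding A_def open_arc_def
    using connected_component_subset by blast+
  have xA: "pt c R x \<notin> A" unfolding A_def using R o g by (intro arc_out) auto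
  have yA: "pt c R y \<notin> A" unfolding A_def using R o g by (intro arc_out) auto
  have AS: "A \<inter> S = {pt c R p}" using S pA aA xA yA by auto
  have qA: "antipode c (pt c R y) \<in> A" unfolding antipode_pt A_def using R o g
    by (intro arc_in) (auto simp: field_simps)
  show ?thesis
    apply (rule bexI[of _ "pt c R p"])
     apply (rule bexI[of _ "pt c R y"])
      apply (intro conjI)
        apply (rule n4)
       apply (rule sed)
      apply (rule bexI[of _ "pt c R a"])
       apply (rule bexI[of _ "pt c R b"])
        apply (intro conjI)
    using n5 AS qA unfolding A_def apply simp_all
    using S n1 n2 by auto
qed


lemma pt_period': "pt c R (t - 2*pi) = pt c R t"
  using pt_period[of c R "t - 2*pi"] by simp

lemma gap_lt:
  assumes R: "R > 0" and H: "HH S c"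
    and S: "S = {pt c R w0, pt c R w1, pt c R w2, pt c R w3, pt c R w4}"
    and o: "w0 < w1" "w1 \<le> w2" "w2 \<le> w3" "w3 \<le> w4" "w4 \<le> w0 + 2*pi"
    and anti: "\<forall>x\<in>S. antipode c x \<notin> S"
  shows "w1 - w0 < pi"
proof (rule ccontr)
  assume "\<not> w1 - w0 < pi"
  hence "w1 - w0 = pi \<or> w1 - w0 > pi" by linarith
  thus False
  proof
    assume e: "w1 - w0 = pi"
    have "antipode c (pt c R w0) = pt c R (w1 - 2*pi)" unfolding antipode_pt using e
      by (simp add: algebra_simps)
    also have "\<dots> = pt c R w1" by (rule pt_period')
    finally show False using anti S by auto
  next
    assume gt: "w1 - w0 > pi"
    show False
    proof (rule gap_lemma[OF R H gt], intro ballI)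
      fix s assume "s \<in> S"
      hence "\<exists>t\<in>{w0 + 2*pi, w1, w2, w3, w4}. s = pt c R t"
        using S pt_period by auto
      moreover have "\<forall>t\<in>{w0 + 2*pi, w1, w2, w3, w4}. w1 \<le> t \<and> t \<le> w0 + 2*pi" using o by auto
      ultimately show "\<exists>t\<ge>w1. t \<le> w0 + 2 * pi \<and> s = pt c R t" by blast
    qed
  qed
qed

lemma comb:
  fixes g0 g1 g2 g3 g4 :: real
  assumes "g0 > 0" "g1 > 0" "g2 > 0" "g3 > 0" "g4 > 0" "g0 + g1 + g2 + g3 + g4 = 2*P"
    "g0 < P" "g1 < P" "g2 < P" "g3 < P" "g4 < P"
  shows "(g4+g0<P \<and> g1+g2<P) \<or> (g0+g1<P \<and> g2+g3<P) \<or> (g1+g2<P \<and> g3+g4<P) \<or>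
         (g2+g3<P \<and> g4+g0<P) \<or> (g3+g4<P \<and> g0+g1<P)"
  using assms by linarith

theorem lemma5p36:
  fixes S :: "complex set" and c :: complex and R :: real
  assumes "R > 0"
    and "S \<subseteq> sphere c R"
    and "card S = 5"
    and "SED S = cball c R"
    and "\<forall>x\<in>S. antipode c x \<notin> S"
    and "\<forall>f. plane_isometry f \<and> f ` S = S \<longrightarrow> f = id"
  shows "\<exists>p\<in>S. \<exists>q\<in>S. p \<noteq> q \<and> SED (S - {p}) = SED S \<and>
           (\<exists>a\<in>S - {p}. \<exists>b\<in>S - {p}. a \<noteq> b \<and>
              open_arc c R a b p \<inter> S = {p} \<and>
              antipode c q \<in> open_arc c R a b p)"
proof -
  note R = assms(1) and sub = assms(2) and anti = assms(5) and SEDS = assms(4)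
  have fin: "finite S" using assms(3) by (metis card.infinite zero_neq_numeral)
  have ne: "S \<noteq> {}" using assms(3) by auto
  have subc: "S \<subseteq> cball c R" using sub by auto
  have min: "is_enclosing_min_disk S c R" by (rule SED_min[OF ne subc SEDS R])
  have H: "HH S c" by (rule H_of_min[OF fin ne sub R min])
  have ex: "\<forall>s\<in>S. \<exists>t. 0 \<le> t \<and> t < 2*pi \<and> s = pt c R t"
    using sphere_pt[OF R] sub by (metis add_0 subsetD)
  define \<theta> where "\<theta> = (\<lambda>s. SOME t. 0 \<le> t \<and> t < 2*pi \<and> s = pt c R t)"
  have th: "0 \<le> \<theta> s \<and> \<theta> s < 2*pi \<and> s = pt c R (\<theta> s)" if "s \<in> S" for s
    unfolding \<theta>_def using someI_ex[OF ex[rule_format, OF that]] .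
  have inj: "inj_on \<theta> S" using th by (metis inj_onI)
  define T where "T = \<theta> ` S"
  have cT: "card T = 5" unfolding T_def using card_image[OF inj] assms(3) by simp
  have fT: "finite T" unfolding T_def using fin by simp
  have ST: "S = pt c R ` T" unfolding T_def using th by force
  have Tr: "\<forall>t\<in>T. 0 \<le> t \<and> t < 2*pi" unfolding T_def using th by auto
  define l where "l = sorted_list_of_set T"
  have ll: "length l = 5" unfolding l_def using cT by simp
  have sl: "sorted_wrt (<) l" unfolding l_def by (rule strict_sorted_list_of_set)
  have setl: "set l = T" unfolding l_def using fT by simp
  obtain t0 t1 t2 t3 t4 where l5: "l = [t0, t1, t2, t3, t4]"
    using ll by (auto simp: numeral_eq_Suc length_Suc_conv)
  have ord: "t0 < t1" "t1 < t2" "t2 < t3" "t3 < t4" using sl l5 by auto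
  have rng: "0 \<le> t0" "t4 < 2*pi" using Tr setl l5 by auto
  have S5: "S = {pt c R t0, pt c R t1, pt c R t2, pt c R t3, pt c R t4}"
    using ST setl l5 by auto
  have pp: "\<And>t. pt c R (t + 2*pi) = pt c R t" "\<And>t. pt c R (t - 2*pi) = pt c R t"
    by (rule pt_period, rule pt_period')
  have g0: "t1 - t0 < pi" using ord rng
    by (intro gap_lt[OF R H S5 _ _ _ _ _ anti]) auto
  have g1: "t2 - t1 < pi"
  proof (rule gap_lt[OF R H _ _ _ _ _ _ anti])
    show "S = {pt c R t1, pt c R t2, pt c R t3, pt c R t4, pt c R (t0 + 2*pi)}" using S5 pp by auto
  qed (use ord rng in auto)
  have g2: "t3 - t2 < pi"
  proof (rule gap_lt[OF R H _ _ _ _ _ _ anti])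
    show "S = {pt c R t2, pt c R t3, pt c R t4, pt c R (t0 + 2*pi), pt c R (t1 + 2*pi)}" using S5 pp by auto
  qed (use ord rng in auto)
  have g3: "t4 - t3 < pi"
  proof (rule gap_lt[OF R H _ _ _ _ _ _ anti])
    show "S = {pt c R t3, pt c R t4, pt c R (t0 + 2*pi), pt c R (t1 + 2*pi), pt c R (t2 + 2*pi)}" using S5 pp by auto
  qed (use ord rng in auto)
  have g4: "(t0 + 2*pi) - t4 < pi"
  proof (rule gap_lt[OF R H _ _ _ _ _ _ anti])
    show "S = {pt c R t4, pt c R (t0 + 2*pi), pt c R (t1 + 2*pi), pt c R (t2 + 2*pi), pt c R (t3 + 2*pi)}" using S5 pp by auto
  qed (use ord rng in auto)
  have "(((t0 + 2*pi) - t4)+(t1 - t0)<pi \<and> (t2 - t1)+(t3 - t2)<pi) \<or> ((t1 - t0)+(t2 - t1)<pi \<and> (t3 - t2)+(t4 - t3)<pi) \<or>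
        ((t2 - t1)+(t3 - t2)<pi \<and> (t4 - t3)+((t0 + 2*pi) - t4)<pi) \<or>
        ((t3 - t2)+(t4 - t3)<pi \<and> ((t0 + 2*pi) - t4)+(t1 - t0)<pi) \<or>
        ((t4 - t3)+((t0 + 2*pi) - t4)<pi \<and> (t1 - t0)+(t2 - t1)<pi)"
    by (rule comb) (use ord rng g0 g1 g2 g3 g4 in auto)
  thus ?thesis
  proof (elim disjE conjE)
    assume h: "(t0 + 2*pi) - t4 + (t1 - t0) < pi" "t2 - t1 + (t3 - t2) < pi"
    show ?thesis
    proof (rule main_config[OF R, of "t4 - 2*pi" t0 t1 t2 t3])
      show "S = {pt c R (t4 - 2*pi), pt c R t0, pt c R t1, pt c R t2, pt c R t3}" using S5 pp by auto
    qed (use ord rng g0 g1 g2 g3 g4 h SEDS in auto)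
  next
    assume h: "t1 - t0 + (t2 - t1) < pi" "t3 - t2 + (t4 - t3) < pi"
    show ?thesis
    proof (rule main_config[OF R, of t0 t1 t2 t3 t4])
      show "S = {pt c R t0, pt c R t1, pt c R t2, pt c R t3, pt c R t4}" using S5 by auto
    qed (use ord rng g0 g1 g2 g3 g4 h SEDS in auto)
  next
    assume h: "t2 - t1 + (t3 - t2) < pi" "t4 - t3 + ((t0 + 2*pi) - t4) < pi"
    show ?thesis
    proof (rule main_config[OF R, of t1 t2 t3 t4 "t0 + 2*pi"])
      show "S = {pt c R t1, pt c R t2, pt c R t3, pt c R t4, pt c R (t0 + 2*pi)}" using S5 pp by auto
    qed (use ord rng g0 g1 g2 g3 g4 h SEDS in auto)
  next
    assume h: "t3 - t2 + (t4 - t3) < pi" "(t0 + 2*pi) - t4 + (t1 - t0) < pi"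
    show ?thesis
    proof (rule main_config[OF R, of t2 t3 t4 "t0 + 2*pi" "t1 + 2*pi"])
      show "S = {pt c R t2, pt c R t3, pt c R t4, pt c R (t0 + 2*pi), pt c R (t1 + 2*pi)}" using S5 pp by auto
    qed (use ord rng g0 g1 g2 g3 g4 h SEDS in auto)
  next
    assume h: "t4 - t3 + ((t0 + 2*pi) - t4) < pi" "t1 - t0 + (t2 - t1) < pi"
    show ?thesis
    proof (rule main_config[OF R, of t3 t4 "t0 + 2*pi" "t1 + 2*pi" "t2 + 2*pi"])
      show "S = {pt c R t3, pt c R t4, pt c R (t0 + 2*pi), pt c R (t1 + 2*pi), pt c R (t2 + 2*pi)}" using S5 pp by auto
    qed (use ord rng g0 g1 g2 g3 g4 h SEDS in auto)
  qed
qed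

end
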